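(* Let $w_1,w_2,w_3\in\Sigma^*$ and let $u,v\in\Sigma^+$ be co-primitive. Then for every injective function $f:\mathbb{N}\to\mathbb{N}$, the language $\{w_1\cdot u^p\cdot w_2\cdot v^{f(p)}\cdot w_3 : p\in\mathbb{N}\}$ is not in $\mathcal{L}(\mathsf{FC})$.
   Context: $\Sigma$ is a fixed finite alphabet. A word $w\in\Sigma^+$ is primitive if there is no $z\in\Sigma^*$ and $k>1$ with $w=z^k$. Two words $w,v\in\Sigma^+$ are conjugate if there exist $x,y\in\Sigma^*$ with $w=xy$ and $v=yx$; they are co-primitive if both are primitive and they are not conjugate. For $w \in \Sigma^*$, $\mathsf{Facs}(w)$ is the set of all factors of $w$. The structure $\mathfrak{A}_w$ representing $w$ has universe $\mathsf{Facs}(w)\cup\{\perp\}$, a ternary relation $R_\circ=\{(x,y,z)\in\mathsf{Facs}(w)^3 : x=y\cdot z\}$, for each letter a constant interpreted as that letter if it occurs in $w$ and as $\perp$ otherwise, and a constant $\varepsilon$ interpreted as the empty word. $\mathsf{FC}$ is first-order logic over such structures, with atomic formulas $(x \mathbin{\dot=} y\cdot z)$ (meaning $R_\circ(x,y,z)$) where $x,y,z$ are variables, letters of $\Sigma$, or $\varepsilon$, closed under $\land,\lor,\neg,\exists,\forall$; quantified variables range over $\mathsf{Facs}(w)$. For a sentence $\varphi$, $\mathcal{L}(\varphi)=\{w\in\Sigma^*:\mathfrak{A}_w\models\varphi\}$, and $\mathcal{L}(\mathsf{FC})$ is the class of all such languages. *)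

theory Defs
  imports Main
begin

definition word_pow :: "'a list \<Rightarrow> nat \<Rightarrow> 'a list" where
  "word_pow z k = concat (replicate k z)"

definition primitive :: "'a list \<Rightarrow> bool" where
  "primitive w \<longleftrightarrow> w \<noteq> [] \<and> \<not> (\<exists>z k. k > 1 \<and> w = word_pow z k)"

definition conjugate :: "'a list \<Rightarrow> 'a list \<Rightarrow> bool" where
  "conjugate w v \<longleftrightarrow> (\<exists>x y. w = x @ y \<and> v = y @ x)"

definition co_primitive :: "'a list \<Rightarrow> 'a list \<Rightarrow> bool" where
  "co_primitive w v \<longleftrightarrow> primitive w \<and> primitive v \<and> \<not> conjugate w v"

definition Facs :: "'a list \<Rightarrow> 'a list set" where
  "Facs w = {x. \<exists>p s. w = p @ x @ s}"

datatype 'a fc_term = FVar nat | FLet 'a | FEps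

datatype 'a fc =
    FAtom "'a fc_term" "'a fc_term" "'a fc_term"   (* x = y . z *)
  | FAnd "'a fc" "'a fc"
  | FOr "'a fc" "'a fc"
  | FNot "'a fc"
  | FEx nat "'a fc"
  | FAll nat "'a fc"

fun fv_term :: "'a fc_term \<Rightarrow> nat set" where
  "fv_term (FVar x) = {x}"
| "fv_term (FLet a) = {}"
| "fv_term FEps = {}"

fun fv :: "'a fc \<Rightarrow> nat set" where
  "fv (FAtom x y z) = fv_term x \<union> fv_term y \<union> fv_term z"
| "fv (FAnd p q) = fv p \<union> fv q"
| "fv (FOr p q) = fv p \<union> fv q"
| "fv (FNot p) = fv p"
| "fv (FEx x p) = fv p - {x}"
| "fv (FAll x p) = fv p - {x}"

text \<open>Interpretation of a term in the structure for w; None stands for the bottom element.\<close>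
fun eval_term :: "'a list \<Rightarrow> (nat \<Rightarrow> 'a list) \<Rightarrow> 'a fc_term \<Rightarrow> 'a list option" where
  "eval_term w \<nu> (FVar x) = Some (\<nu> x)"
| "eval_term w \<nu> (FLet a) = (if a \<in> set w then Some [a] else None)"
| "eval_term w \<nu> FEps = Some []"

fun sat :: "'a list \<Rightarrow> (nat \<Rightarrow> 'a list) \<Rightarrow> 'a fc \<Rightarrow> bool" where
  "sat w \<nu> (FAtom x y z) =
     (case (eval_term w \<nu> x, eval_term w \<nu> y, eval_term w \<nu> z) of
        (Some a, Some b, Some c) \<Rightarrow> a \<in> Facs w \<and> b \<in> Facs w \<and> c \<in> Facs w \<and> a = b @ c
      | _ \<Rightarrow> False)"
| "sat w \<nu> (FAnd p q) = (sat w \<nu> p \<and> sat w \<nu> q)"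
| "sat w \<nu> (FOr p q) = (sat w \<nu> p \<or> sat w \<nu> q)"
| "sat w \<nu> (FNot p) = (\<not> sat w \<nu> p)"
| "sat w \<nu> (FEx x p) = (\<exists>u \<in> Facs w. sat w (\<nu>(x := u)) p)"
| "sat w \<nu> (FAll x p) = (\<forall>u \<in> Facs w. sat w (\<nu>(x := u)) p)"

definition sentence :: "'a fc \<Rightarrow> bool" where
  "sentence \<phi> \<longleftrightarrow> fv \<phi> = {}"

text \<open>For sentences the valuation is irrelevant; we fix the one mapping everything to epsilon.\<close>
definition fc_lang :: "'a fc \<Rightarrow> 'a list set" where
  "fc_lang \<phi> = {w. sat w (\<lambda>_. []) \<phi>}"

definition FC_languages :: "('a::finite) list set set" where
  "FC_languages = {L. \<exists>\<phi>. sentence \<phi> \<and> L = fc_lang \<phi>}"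

end

theory Submission
  imports Defs
begin

lemma length_word_pow[simp]: "length (word_pow z k) = k * length z"
  by (simp add: word_pow_def length_concat sum_list_replicate)

lemma word_pow_0[simp]: "word_pow z 0 = []"
  by (simp add: word_pow_def)

lemma word_pow_Suc: "word_pow z (Suc k) = z @ word_pow z k"
  by (simp add: word_pow_def)

lemma word_pow_shift: "word_pow (a @ b) k @ a = a @ word_pow (b @ a) k"
  by (induction k) (auto simp: word_pow_Suc)

lemma word_pow_Suc2: "word_pow z (Suc k) = word_pow z k @ z"
  by (induction k) (simp_all add: word_pow_Suc)

lemma word_pow_add: "word_pow z (m + n) = word_pow z m @ word_pow z n"
  by (simp add: word_pow_def replicate_add)

lemma nth_word_pow: "i < k * length z \<Longrightarrow> word_pow z k ! i = z ! (i mod length z)"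
proof (induction k arbitrary: i)
  case 0 then show ?case by simp
next
  case (Suc k)
  show ?case
  proof (cases "i < length z")
    case True then show ?thesis by (simp add: word_pow_Suc nth_append)
  next
    case False
    then have "i - length z < k * length z" using Suc.prems by auto
    then have "word_pow z k ! (i - length z) = z ! ((i - length z) mod length z)" using Suc.IH by blast
    moreover have "(i - length z) mod length z = i mod length z"
      using False by (simp add: mod_if le_mod_geq)
    ultimately show ?thesis using False by (simp add: word_pow_Suc nth_append)
  qed
qed

lemma rotate_word_pow:
  assumes "z \<noteq> []" shows "rotate m (word_pow z k) = word_pow (rotate m z) k"
proof (rule nth_equalityI)
  show "length (rotate m (word_pow z k)) = length (word_pow (rotate m z) k)" by simp
  fix i assume "i < length (rotate m (word_pow z k))"
  then have i: "i < k * length z" by simp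
  have "rotate m (word_pow z k) ! i = word_pow z k ! ((m + i) mod (k * length z))"
    using i by (simp add: nth_rotate)
  also have "\<dots> = z ! (((m + i) mod (k * length z)) mod length z)"
  proof -
    have "0 < k * length z" using i by linarith
    then show ?thesis by (intro nth_word_pow) simp
  qed
  also have "\<dots> = z ! ((m + i) mod length z)"
    by (simp add: mod_mod_cancel)
  finally have 1: "rotate m (word_pow z k) ! i = z ! ((m + i) mod length z)" .
  have "word_pow (rotate m z) k ! i = rotate m z ! (i mod length z)"
    using i by (simp add: nth_word_pow)
  also have "\<dots> = z ! ((m + i mod length z) mod length z)"
    using assms by (simp add: nth_rotate)
  also have "\<dots> = z ! ((m + i) mod length z)" by (simp add: mod_add_right_eq)
  finally show "rotate m (word_pow z k) ! i = word_pow (rotate m z) k ! i" using 1 by simp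
qed

lemma rotate_back: "rotate (length v - m mod length v) (rotate m v) = v"
proof (cases "v = []")
  case True then show ?thesis by simp
next
  case False
  have "rotate (length v - m mod length v) (rotate m v) = rotate (length v - m mod length v + m) v"
    by (simp add: rotate_rotate)
  moreover have "(length v - m mod length v + m) mod length v = 0"
  proof -
    have "length v - m mod length v + m = length v - m mod length v + m mod length v + length v * (m div length v)"
      by simp
    also have "\<dots> = length v * (Suc (m div length v))"
      using False by (simp add: less_imp_le)
    finally show ?thesis by simp
  qed
  ultimately show ?thesis by simp
qed

lemma primitive_rotate:
  assumes "primitive u" shows "primitive (rotate m u)"
proof -
  have ne: "u \<noteq> []" using assms by (simp add: primitive_def)
  { fix z k assume k: "k > 1" and eq: "rotate m u = word_pow z k"
    have "z \<noteq> []"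
    proof
      assume "z = []"
      then have "rotate m u = []" using eq by (simp add: word_pow_def)
      with ne show False by simp
    qed
    have "u = rotate (length u - m mod length u) (rotate m u)" by (simp add: rotate_back)
    also have "\<dots> = word_pow (rotate (length u - m mod length u) z) k"
      using eq \<open>z \<noteq> []\<close> by (simp add: rotate_word_pow)
    finally have "u = word_pow (rotate (length u - m mod length u) z) k" .
    then have False using assms k unfolding primitive_def by blast
  }
  moreover have "rotate m u \<noteq> []" using ne by simp
  ultimately show ?thesis unfolding primitive_def by blast
qed

lemma conjugate_rotate: "conjugate u (rotate m u)"
  unfolding conjugate_def
  by (rule exI[of _ "take (m mod length u) u"], rule exI[of _ "drop (m mod length u) u"])
     (simp add: rotate_drop_take)

lemma rotates_conjugate:
  assumes "rotate m1 u = rotate m2 v" shows "conjugate u v"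
proof -
  have "v = rotate (length v - m2 mod length v) (rotate m2 v)" by (simp add: rotate_back)
  also have "\<dots> = rotate (length v - m2 mod length v) (rotate m1 u)" using assms by simp
  also have "\<dots> = rotate (length v - m2 mod length v + m1) u" by (simp add: rotate_rotate)
  finally have "v = rotate (length v - m2 mod length v + m1) u" .
  then obtain k where "v = rotate k u" by blast
  then show ?thesis using conjugate_rotate[of u k] by simp
qed

lemma word_pow_Suc_swap: "word_pow (a @ b) (Suc k) = a @ word_pow (b @ a) k @ b"
proof -
  have "word_pow (a @ b) (Suc k) = (word_pow (a @ b) k @ a) @ b" by (simp add: word_pow_Suc2)
  also have "\<dots> = a @ word_pow (b @ a) k @ b" by (simp only: word_pow_shift append_assoc)
  finally show ?thesis .
qed

lemma power_eq_primitive: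
  assumes px: "primitive x" and py: "primitive y" and n: "n > 0" and m: "m > 0"
    and eq: "word_pow x n = word_pow y m"
  shows "x = y"
proof -
  have comm: "x @ y = y @ x" if px: "x \<noteq> []" and eq: "word_pow x n = word_pow y m"
      and le: "length x \<le> length y" and n: "n > 0" and m: "m > 0" for x y :: "'b list" and n m
  proof -
    have "take (length x) (word_pow x n) = x"
      using n by (cases n) (auto simp: word_pow_Suc)
    moreover have "take (length y) (word_pow y m) = y"
      using m by (cases m) (auto simp: word_pow_Suc)
    ultimately have "take (length x) y = x" using eq le
      by (metis min.absorb1 take_take)
    then obtain t where yt: "y = x @ t" by (metis append_take_drop_id)
    obtain n' where n': "n = Suc n'" using n by (cases n) auto
    obtain m' where m': "m = Suc m'" using m by (cases m) auto
    have "x @ word_pow x n' = word_pow x n" using n' by (simp add: word_pow_Suc)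
    also have "\<dots> = word_pow (x@t) (Suc m')" using eq yt m' by simp
    also have "\<dots> = x @ word_pow (t@x) m' @ t" by (rule word_pow_Suc_swap)
    finally have "x @ word_pow x n' = x @ word_pow (t @ x) m' @ t" .
    then have "word_pow x n' = word_pow (t @ x) m' @ t" by simp
    then have "word_pow x n' = word_pow (t @ x) m' @ t" by simp
    then have "word_pow x n = word_pow (t @ x) m' @ t @ x" using n' by (simp add: word_pow_Suc2)
    also have "\<dots> = word_pow (t @ x) m" using m' by (simp add: word_pow_Suc2)
    finally have "word_pow (x @ t) m = word_pow (t @ x) m" using eq yt by simp
    then have "take (length (x@t)) (word_pow (x @ t) m) = take (length (t@x)) (word_pow (t @ x) m)"
      by (simp add: add.commute)
    then have "x @ t = t @ x" using m' by (simp add: word_pow_Suc)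
    then show ?thesis using yt by simp
  qed
  have xne: "x \<noteq> []" "y \<noteq> []" using px py by (auto simp: primitive_def)
  have "x @ y = y @ x"
  proof (cases "length x \<le> length y")
    case True then show ?thesis using comm xne eq n m by blast
  next
    case False then show ?thesis using comm[of y m x n] xne eq n m by fastforce
  qed
  then obtain i j z where zi: "concat (replicate i z) = x" and zj: "concat (replicate j z) = y"
    using comm_append_are_replicate by blast
  have "i = 1"
  proof -
    have "i \<noteq> 0" using zi xne by auto
    moreover have "\<not> i > 1" using px zi by (auto simp: primitive_def word_pow_def)
    ultimately show ?thesis by simp
  qed
  moreover have "j = 1"
  proof -
    have "j \<noteq> 0" using zj xne by auto
    moreover have "\<not> j > 1" using py zj by (auto simp: primitive_def word_pow_def)
    ultimately show ?thesis by simp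
  qed
  ultimately show ?thesis using zi zj by simp
qed

lemma factor_of_power:
  assumes z: "z \<in> Facs (word_pow u N)" and ne: "u \<noteq> []" and len: "k * length u \<le> length z"
  shows "\<exists>off. take (k * length u) z = word_pow (rotate off u) k"
proof -
  obtain p s where eq: "word_pow u N = p @ z @ s" using z by (auto simp: Facs_def)
  show ?thesis
  proof (intro exI nth_equalityI)
    show "length (take (k * length u) z) = length (word_pow (rotate (length p) u) k)"
      using len by simp
    fix i assume "i < length (take (k * length u) z)"
    then have i: "i < k * length u" "i < length z" using len by auto
    have "length (word_pow u N) = length p + length z + length s" using eq by simp
    then have "length p + i < N * length u" using i by simp
    then have "word_pow u N ! (length p + i) = u ! ((length p + i) mod length u)"
      by (simp add: nth_word_pow)
    moreover have "word_pow u N ! (length p + i) = z ! i"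
    proof -
      have "word_pow u N ! (length p + i) = (p @ z @ s) ! (length p + i)" by (simp only: eq)
      also have "\<dots> = z ! i" using i by (simp add: nth_append)
      finally show ?thesis .
    qed
    moreover have "word_pow (rotate (length p) u) k ! i = u ! ((length p + i) mod length u)"
      using i ne by (simp add: nth_word_pow nth_rotate mod_add_right_eq)
    ultimately show "take (k * length u) z ! i = word_pow (rotate (length p) u) k ! i"
      using i by simp
  qed
qed

lemma common_factor_bound:
  assumes cp: "co_primitive u v"
    and zu: "z \<in> Facs (word_pow u N)" and zv: "z \<in> Facs (word_pow v M)"
  shows "length z < length u * length v"
proof (rule ccontr)
  assume "\<not> ?thesis"
  then have len: "length u * length v \<le> length z" by simp
  have pu: "primitive u" and pv: "primitive v" and nc: "\<not> conjugate u v"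
    using cp by (auto simp: co_primitive_def)
  have une: "u \<noteq> []" and vne: "v \<noteq> []" using pu pv by (auto simp: primitive_def)
  have cm: "length v * length u = length u * length v" by (rule mult.commute)
  have len2: "length v * length u \<le> length z" using len cm by linarith
  obtain o1 where o1: "take (length v * length u) z = word_pow (rotate o1 u) (length v)"
    using factor_of_power[OF zu une len2] by blast
  obtain o2 where o2: "take (length u * length v) z = word_pow (rotate o2 v) (length u)"
    using factor_of_power[OF zv vne len] by blast
  have eqp: "word_pow (rotate o1 u) (length v) = word_pow (rotate o2 v) (length u)"
    using o1 o2 cm by metis
  have "rotate o1 u = rotate o2 v"
    using power_eq_primitive[OF primitive_rotate[OF pu] primitive_rotate[OF pv] _ _ eqp] une vne by simp
  then show False using nc rotates_conjugate by blast
qed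


lemma facs_refl[simp]: "x \<in> Facs x"
  unfolding Facs_def by (rule CollectI, rule exI[of _ "[]"], rule exI[of _ "[]"]) simp

lemma facs_Nil[simp]: "[] \<in> Facs x"
  unfolding Facs_def by (rule CollectI, rule exI[of _ "[]"], rule exI[of _ x]) simp

lemma facs_mid: "z = p @ x @ s \<Longrightarrow> x \<in> Facs z"
  unfolding Facs_def by blast

lemma facs_prefix: "z = x @ s \<Longrightarrow> x \<in> Facs z"
  using facs_mid[of z "[]" x s] by simp

lemma facs_suffix: "z = p @ x \<Longrightarrow> x \<in> Facs z"
  using facs_mid[of z p x "[]"] by simp

lemma facs_trans: "x \<in> Facs y \<Longrightarrow> y \<in> Facs z \<Longrightarrow> x \<in> Facs z"
  unfolding Facs_def by (clarsimp) (metis append_assoc)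

lemma facs_take: "take n x \<in> Facs x"
  unfolding Facs_def by (rule CollectI, rule exI[of _ "[]"], rule exI[of _ "drop n x"]) simp

lemma facs_drop: "drop n x \<in> Facs x"
  unfolding Facs_def by (rule CollectI, rule exI[of _ "take n x"], rule exI[of _ "[]"]) simp

lemma facs_rev: "x \<in> Facs w \<Longrightarrow> rev x \<in> Facs (rev w)"
  unfolding Facs_def by clarsimp (metis append_assoc rev_append)

lemma facs_drop_append:
  assumes "x \<in> Facs (y @ z)" shows "drop (length y) x \<in> Facs z"
proof -
  obtain p s where eq: "y @ z = p @ x @ s" using assms by (auto simp: Facs_def)
  show ?thesis
  proof (cases "length p \<le> length y")
    case True
    have "z = drop (length y) (p @ x @ s)" using eq by (metis append_eq_conv_conj)
    also have "\<dots> = drop (length y - length p) (x @ s)" using True by simp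
    also have "\<dots> = drop (length y - length p) x @ drop (length y - length p - length x) s" by simp
    finally have "drop (length y - length p) x \<in> Facs z" by (rule facs_prefix)
    moreover have "drop (length y) x = drop (length p) (drop (length y - length p) x)"
      using True by simp
    ultimately show ?thesis using facs_drop facs_trans by metis
  next
    case False
    have "z = drop (length y) (p @ x @ s)" using eq by (metis append_eq_conv_conj)
    also have "\<dots> = drop (length y) p @ x @ s" using False by simp
    finally have "x \<in> Facs z" unfolding Facs_def by blast
    then show ?thesis using facs_drop facs_trans by metis
  qed
qed

lemma facs_take_append:
  assumes "x \<in> Facs (y @ z)" shows "take (length x - length z) x \<in> Facs y"
proof -
  have "rev x \<in> Facs (rev z @ rev y)" using facs_rev[OF assms] by simp
  then have "drop (length z) (rev x) \<in> Facs (rev y)" using facs_drop_append by fastforce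
  then have "rev (drop (length z) (rev x)) \<in> Facs y" using facs_rev by fastforce
  then show ?thesis by (simp add: rev_drop)
qed

lemma common_bound:
  assumes cp: "co_primitive u v"
    and x1: "x \<in> Facs (w1 @ word_pow u a)" and x2: "x \<in> Facs (w2 @ word_pow v b @ w3)"
  shows "length x < length w1 + length w2 + length w3 + length u * length v"
proof (rule ccontr)
  assume "\<not> ?thesis"
  then have len: "length w1 + length w2 + length w3 + length u * length v \<le> length x" by simp
  have y: "drop (length w1) x \<in> Facs (word_pow u a)" using facs_drop_append[OF x1] .
  have y2: "drop (length w2) x \<in> Facs (word_pow v b @ w3)" using facs_drop_append[OF x2] .
  define n where "n = length (drop (length w2) x) - length w3"
  have y3: "take n (drop (length w2) x) \<in> Facs (word_pow v b)"
    using facs_take_append[OF y2] unfolding n_def .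
  define c where "c = drop (length w1) (take n (drop (length w2) x))"
  have cv: "c \<in> Facs (word_pow v b)" unfolding c_def using y3 facs_drop facs_trans by metis
  have "c = take (n - length w1) (drop (length w1) (drop (length w2) x))"
    unfolding c_def by (simp add: drop_take)
  also have "\<dots> = take (n - length w1) (drop (length w2) (drop (length w1) x))"
    by (simp add: add.commute)
  finally have "c \<in> Facs (drop (length w1) x)" using facs_take facs_drop facs_trans by metis
  then have cu: "c \<in> Facs (word_pow u a)" using y facs_trans by metis
  have "length c = length x - length w2 - length w3 - length w1"
    unfolding c_def n_def using len by simp
  then have "length u * length v \<le> length c" using len by simp
  moreover have "length c < length u * length v" using common_factor_bound[OF cp cu cv] .
  ultimately show False by simp
qed

lemma word_pow_mult: "word_pow (word_pow u e) k = word_pow u (e * k)"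
  by (induction k) (simp_all add: word_pow_Suc word_pow_add[symmetric] add.commute)

lemma conj_iter: "X @ w = w @ Y \<Longrightarrow> word_pow X k @ w = w @ word_pow Y k"
proof (induction k)
  case 0 then show ?case by simp
next
  case (Suc k)
  have "word_pow X (Suc k) @ w = word_pow X k @ (X @ w)" by (simp add: word_pow_Suc2)
  also have "\<dots> = (word_pow X k @ w) @ Y" using Suc.prems by simp
  also have "\<dots> = w @ word_pow Y k @ Y" using Suc.IH Suc.prems by simp
  also have "\<dots> = w @ word_pow Y (Suc k)" by (simp add: word_pow_Suc2)
  finally show ?case .
qed

lemma no_conj_eq:
  assumes cp: "co_primitive u v" and e: "e > 0"
    and eq: "word_pow u e @ w = w @ word_pow v g"
  shows False
proof -
  have une: "u \<noteq> []" using cp by (auto simp: co_primitive_def primitive_def)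
  define k where "k = length w + length u * length v"
  have eq2: "word_pow u (e * k) @ w = w @ word_pow v (g * k)"
    using conj_iter[OF eq, of k] by (simp add: word_pow_mult)
  define c where "c = drop (length w) (word_pow u (e * k))"
  have cu: "c \<in> Facs (word_pow u (e * k))" unfolding c_def by (rule facs_drop)
  have "drop (length w) (word_pow u (e * k) @ w) = word_pow v (g * k)" using eq2 by simp
  then have "c @ drop (length w - length (word_pow u (e * k))) w = word_pow v (g * k)"
    unfolding c_def by simp
  then have cv: "c \<in> Facs (word_pow v (g * k))" by (metis facs_prefix)
  have "k \<le> e * k * length u"
  proof -
    have "1 \<le> e * length u" using e une by (simp add: Suc_leI)
    then have "1 * k \<le> e * length u * k" by (rule mult_right_mono) simp
    then show ?thesis by (simp add: ac_simps)
  qed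
  moreover have "length c = e * k * length u - length w" unfolding c_def by simp
  ultimately have "length u * length v \<le> length c" unfolding k_def by linarith
  moreover have "length c < length u * length v" using common_factor_bound[OF cp cu cv] .
  ultimately show False by simp
qed

lemma uniqueness:
  assumes cp: "co_primitive u v"
    and eq: "w1 @ word_pow u a @ w2 @ word_pow v b @ w3 = w1 @ word_pow u c @ w2 @ word_pow v d @ w3"
  shows "a = c \<and> b = d"
proof -
  have une: "u \<noteq> []" and vne: "v \<noteq> []" using cp by (auto simp: co_primitive_def primitive_def)
  have E: "word_pow u a @ w2 @ word_pow v b = word_pow u c @ w2 @ word_pow v d"
    using eq by simp
  have "length (word_pow u a @ w2 @ word_pow v b) = length (word_pow u c @ w2 @ word_pow v d)"
    using E by (rule arg_cong)
  then have L: "a * length u + b * length v = c * length u + d * length v" by simp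
  consider "a = c" | "a < c" | "c < a" by linarith
  then show ?thesis
  proof cases
    case 1
    then have "word_pow v b = word_pow v d" using E by simp
    then have "length (word_pow v b) = length (word_pow v d)" by (rule arg_cong)
    then have "b * length v = d * length v" by simp
    then show ?thesis using 1 vne by simp
  next
    case 2
    then have "d < b"
    proof -
      have "a * length u < c * length u" using 2 une by simp
      then have "d * length v < b * length v" using L by linarith
      then show ?thesis by (simp add: mult_less_cancel2)
    qed
    have "word_pow u c = word_pow u a @ word_pow u (c - a)" using 2 word_pow_add[of u a "c - a"] by simp
    moreover have "word_pow v b = word_pow v (b - d) @ word_pow v d" using \<open>d < b\<close> word_pow_add[of v "b - d" d] by simp
    ultimately have "w2 @ word_pow v (b - d) = word_pow u (c - a) @ w2" using E by simp
    then show ?thesis using no_conj_eq[OF cp, of "c - a" w2 "b - d"] 2 by simp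
  next
    case 3
    then have "b < d"
    proof -
      have "c * length u < a * length u" using 3 une by simp
      then have "b * length v < d * length v" using L by linarith
      then show ?thesis by (simp add: mult_less_cancel2)
    qed
    have "word_pow u a = word_pow u c @ word_pow u (a - c)" using 3 word_pow_add[of u c "a - c"] by simp
    moreover have "word_pow v d = word_pow v (d - b) @ word_pow v b" using \<open>b < d\<close> word_pow_add[of v "d - b" b] by simp
    ultimately have "word_pow u (a - c) @ w2 = w2 @ word_pow v (d - b)" using E by simp
    then show ?thesis using no_conj_eq[OF cp, of "a - c" w2 "d - b"] 3 by simp
  qed
qed


definition frank :: "('x \<Rightarrow> 'y \<Rightarrow> bool) \<Rightarrow> bool" where
  "frank S \<longleftrightarrow> finite (range S)"

lemma frank_flip: assumes "frank S" shows "frank (\<lambda>y x. S x y)"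
proof -
  have "range (\<lambda>y x. S x y) \<subseteq> (\<lambda>R x. S x \<in> R) ` Pow (range S)"
  proof
    fix c assume "c \<in> range (\<lambda>y x. S x y)"
    then obtain y where c: "c = (\<lambda>x. S x y)" by blast
    have "c = (\<lambda>x. S x \<in> {r \<in> range S. r y})" unfolding c by auto
    then show "c \<in> (\<lambda>R x. S x \<in> R) ` Pow (range S)" by blast
  qed
  then show ?thesis using assms unfolding frank_def by (meson finite_Pow_iff finite_imageI finite_subset)
qed

lemma frank_and: "frank S \<Longrightarrow> frank T \<Longrightarrow> frank (\<lambda>A B. S A B \<and> T A B)"
  unfolding frank_def
proof -
  assume f: "finite (range S)" "finite (range T)"
  have "range (\<lambda>A B. S A B \<and> T A B) \<subseteq> (\<lambda>(r1, r2) B. r1 B \<and> r2 B) ` (range S \<times> range T)"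
    by auto
  then show "finite (range (\<lambda>A B. S A B \<and> T A B))" using f by (meson finite_SigmaI finite_imageI finite_subset)
qed

lemma frank_or: "frank S \<Longrightarrow> frank T \<Longrightarrow> frank (\<lambda>A B. S A B \<or> T A B)"
  unfolding frank_def
proof -
  assume f: "finite (range S)" "finite (range T)"
  have "range (\<lambda>A B. S A B \<or> T A B) \<subseteq> (\<lambda>(r1, r2) B. r1 B \<or> r2 B) ` (range S \<times> range T)"
    by auto
  then show "finite (range (\<lambda>A B. S A B \<or> T A B))" using f by (meson finite_SigmaI finite_imageI finite_subset)
qed

lemma frank_not: "frank S \<Longrightarrow> frank (\<lambda>A B. \<not> S A B)"
  unfolding frank_def
proof -
  assume f: "finite (range S)"
  have "range (\<lambda>A B. \<not> S A B) \<subseteq> (\<lambda>r B. \<not> r B) ` range S" by auto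
  then show "finite (range (\<lambda>A B. \<not> S A B))" using f by (meson finite_imageI finite_subset)
qed

lemma frank_left: "frank (\<lambda>A B. g A)"
proof -
  have "range (\<lambda>A (B::'b). g A) \<subseteq> {\<lambda>B. True, \<lambda>B. False}" by auto
  then show ?thesis unfolding frank_def by (meson finite.emptyI finite_insert finite_subset)
qed

lemma frank_right: "frank (\<lambda>A B. h B)"
proof -
  have "range (\<lambda>(A::'b) B. h B) \<subseteq> {h}" by auto
  then show ?thesis unfolding frank_def using finite_subset by fastforce
qed

lemma frank_comp: assumes "frank S" shows "frank (\<lambda>A B. S (f A) (g B))"
proof -
  have "range (\<lambda>A B. S (f A) (g B)) \<subseteq> (\<lambda>r B. r (g B)) ` range S" by auto
  then show ?thesis using assms unfolding frank_def by (meson finite_imageI finite_subset)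
qed

lemma frank_exL: assumes "frank S" shows "frank (\<lambda>A B. \<exists>L\<in>G A. S (h A L) B)"
proof -
  have "range (\<lambda>A B. \<exists>L\<in>G A. S (h A L) B) \<subseteq> (\<lambda>R B. \<exists>r\<in>R. r B) ` Pow (range S)"
  proof
    fix c assume "c \<in> range (\<lambda>A B. \<exists>L\<in>G A. S (h A L) B)"
    then obtain A where c: "c = (\<lambda>B. \<exists>L\<in>G A. S (h A L) B)" by blast
    have "c = (\<lambda>B. \<exists>r\<in>((\<lambda>L. S (h A L)) ` G A). r B)" unfolding c by auto
    moreover have "(\<lambda>L. S (h A L)) ` G A \<in> Pow (range S)" by auto
    ultimately show "c \<in> (\<lambda>R B. \<exists>r\<in>R. r B) ` Pow (range S)" by blast
  qed
  then show ?thesis using assms unfolding frank_def by (meson finite_Pow_iff finite_imageI finite_subset)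
qed

lemma frank_exR: assumes "frank S" shows "frank (\<lambda>A B. \<exists>R\<in>G B. S A (h B R))"
proof -
  have "frank (\<lambda>B A. S A B)" using frank_flip[OF assms] .
  then have "frank (\<lambda>B A. \<exists>R\<in>G B. S A (h B R))"
    using frank_exL[of "\<lambda>B A. S A B" G h] by simp
  then show ?thesis using frank_flip by fastforce
qed

lemma frank_exLR: assumes "frank S"
  shows "frank (\<lambda>A B. \<exists>L\<in>GA A. \<exists>R\<in>GB B. S (hA A L) (hB B R))"
proof -
  have "frank (\<lambda>A' B. \<exists>R\<in>GB B. S A' (hB B R))" using frank_exR[OF assms] .
  then show ?thesis using frank_exL[of "\<lambda>A' B. \<exists>R\<in>GB B. S A' (hB B R)" GA hA] by simp
qed

lemma frank_fin: assumes "finite F" shows "frank (\<lambda>A B. \<exists>d\<in>F. g d A \<and> h d B)"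
proof -
  have "range (\<lambda>A B. \<exists>d\<in>F. g d A \<and> h d B) \<subseteq> (\<lambda>D B. \<exists>d\<in>D. h d B) ` Pow F"
  proof
    fix c assume "c \<in> range (\<lambda>A B. \<exists>d\<in>F. g d A \<and> h d B)"
    then obtain A where c: "c = (\<lambda>B. \<exists>d\<in>F. g d A \<and> h d B)" by blast
    have "c = (\<lambda>B. \<exists>d\<in>{d\<in>F. g d A}. h d B)" unfolding c by auto
    then show "c \<in> (\<lambda>D B. \<exists>d\<in>D. h d B) ` Pow F" by blast
  qed
  then show ?thesis using assms unfolding frank_def by (meson finite_Pow_iff finite_imageI finite_subset)
qed

lemma frank_infinite: fixes f :: "nat \<Rightarrow> nat" assumes "inj f" shows "\<not> frank (\<lambda>a b. b = (f a :: nat))"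
proof
  assume "frank (\<lambda>a b. b = f a)"
  then have fin: "finite (range (\<lambda>a b. b = f a))" unfolding frank_def .
  have "inj (\<lambda>a b. b = f a)"
  proof (rule injI)
    fix a a' assume "(\<lambda>b. b = f a) = (\<lambda>b. b = f a')"
    then have "f a = f a'" using fun_cong[of "\<lambda>b. b = f a" "\<lambda>b. b = f a'" "f a"] by simp
    then show "a = a'" using assms by (simp add: inj_eq)
  qed
  then have "finite (UNIV :: nat set)" by (rule finite_imageD[OF fin])
  then show False by simp
qed


definition LS :: "(nat \<Rightarrow> 'a list) \<Rightarrow> 'a list set" where
  "LS P = {x. \<exists>a. x \<in> Facs (P a)} \<union> {x. length x \<le> 1}"

lemma LS_mid: assumes "x \<in> LS P" "x = p @ m @ s" shows "m \<in> LS P"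
proof -
  have "m \<in> Facs x" using assms(2) by (rule facs_mid)
  from assms(1) consider (a) a where "x \<in> Facs (P a)" | (b) "length x \<le> 1" unfolding LS_def by blast
  then show ?thesis
  proof cases
    case a
    then have "m \<in> Facs (P a)" using \<open>m \<in> Facs x\<close> facs_trans by blast
    then show ?thesis unfolding LS_def by blast
  next
    case b
    then have "length m \<le> 1" using assms(2) by simp
    then show ?thesis unfolding LS_def by blast
  qed
qed

lemma LS_prefix: "x \<in> LS P \<Longrightarrow> x = m @ s \<Longrightarrow> m \<in> LS P"
  using LS_mid[of x P "[]" m s] by simp

lemma LS_suffix: "x \<in> LS P \<Longrightarrow> x = p @ m \<Longrightarrow> m \<in> LS P"
  using LS_mid[of x P p m "[]"] by simp

lemma eq_split:
  assumes "L1 @ R1 = L2 @ R2 @ L3 @ R3"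
  shows "(\<exists>D. L2 = L1 @ D \<and> R1 = D @ R2 @ L3 @ R3)
    \<or> (\<exists>D E. L1 = L2 @ D \<and> R2 = D @ E \<and> R1 = E @ L3 @ R3)
    \<or> (\<exists>D E. L1 = L2 @ R2 @ D \<and> L3 = D @ E \<and> R1 = E @ R3)
    \<or> (\<exists>D. L1 = L2 @ R2 @ L3 @ D \<and> R3 = D @ R1)"
proof -
  obtain us where "(L1 = L2 @ us \<and> us @ R1 = R2 @ L3 @ R3) \<or> (L1 @ us = L2 \<and> R1 = us @ R2 @ L3 @ R3)"
    using assms append_eq_append_conv2[of L1 R1 L2 "R2 @ L3 @ R3"] by blast
  then show ?thesis
  proof
    assume "L1 @ us = L2 \<and> R1 = us @ R2 @ L3 @ R3" then show ?thesis by blast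
  next
    assume h1: "L1 = L2 @ us \<and> us @ R1 = R2 @ L3 @ R3"
    then obtain vs where "(us = R2 @ vs \<and> vs @ R1 = L3 @ R3) \<or> (us @ vs = R2 \<and> R1 = vs @ L3 @ R3)"
      using append_eq_append_conv2[of us R1 R2 "L3 @ R3"] by blast
    then show ?thesis
    proof
      assume "us @ vs = R2 \<and> R1 = vs @ L3 @ R3" then show ?thesis using h1 by blast
    next
      assume h2: "us = R2 @ vs \<and> vs @ R1 = L3 @ R3"
      then obtain ws where "(vs = L3 @ ws \<and> ws @ R1 = R3) \<or> (vs @ ws = L3 \<and> R1 = ws @ R3)"
        using append_eq_append_conv2[of vs R1 L3 R3] by blast
      then show ?thesis
      proof
        assume "vs @ ws = L3 \<and> R1 = ws @ R3" then show ?thesis using h1 h2 by auto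
      next
        assume "vs = L3 @ ws \<and> ws @ R1 = R3" then show ?thesis using h1 h2 by auto
      qed
    qed
  qed
qed

definition g1 :: "'a list \<times> 'a list \<Rightarrow> 'a list \<times> 'a list \<times> 'a list \<Rightarrow> bool" where
  "g1 d A = (case A of (L1, L2, L3) \<Rightarrow> L2 = L1 @ fst d \<and> L3 = snd d)"
definition h1 :: "'a list \<times> 'a list \<Rightarrow> 'a list \<times> 'a list \<times> 'a list \<Rightarrow> bool" where
  "h1 d B = (case B of (R1, R2, R3) \<Rightarrow> R1 = fst d @ R2 @ snd d @ R3)"
definition g2 :: "'a list \<times> 'a list \<Rightarrow> 'a list \<times> 'a list \<times> 'a list \<Rightarrow> bool" where
  "g2 d A = (case A of (L1, L2, L3) \<Rightarrow> L1 = L2 @ fst d \<and> L3 = snd d)"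
definition h2 :: "'a list \<times> 'a list \<Rightarrow> 'a list \<times> 'a list \<times> 'a list \<Rightarrow> bool" where
  "h2 d B = (case B of (R1, R2, R3) \<Rightarrow> (\<exists>E. R2 = fst d @ E \<and> R1 = E @ snd d @ R3))"
definition g3 :: "'a list \<times> 'a list \<Rightarrow> 'a list \<times> 'a list \<times> 'a list \<Rightarrow> bool" where
  "g3 d A = (case A of (L1, L2, L3) \<Rightarrow> (\<exists>D. L1 = L2 @ fst d @ D \<and> L3 = D @ snd d))"
definition h3 :: "'a list \<times> 'a list \<Rightarrow> 'a list \<times> 'a list \<times> 'a list \<Rightarrow> bool" where
  "h3 d B = (case B of (R1, R2, R3) \<Rightarrow> R2 = fst d \<and> R1 = snd d @ R3)"
definition g4 :: "'a list \<times> 'a list \<Rightarrow> 'a list \<times> 'a list \<times> 'a list \<Rightarrow> bool" where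
  "g4 d A = (case A of (L1, L2, L3) \<Rightarrow> L1 = L2 @ fst d @ L3 @ snd d)"
definition h4 :: "'a list \<times> 'a list \<Rightarrow> 'a list \<times> 'a list \<times> 'a list \<Rightarrow> bool" where
  "h4 d B = (case B of (R1, R2, R3) \<Rightarrow> R2 = fst d \<and> R3 = snd d @ R1)"

definition Seq where
  "Seq F = (\<lambda>A B. ((\<exists>d\<in>F\<times>F. g1 d A \<and> h1 d B) \<or> (\<exists>d\<in>F\<times>F. g2 d A \<and> h2 d B))
     \<or> ((\<exists>d\<in>F\<times>F. g3 d A \<and> h3 d B) \<or> (\<exists>d\<in>F\<times>F. g4 d A \<and> h4 d B)))"

lemma frank_Seq: assumes "finite F" shows "frank (Seq F)"
proof -
  have f: "finite (F \<times> F)" by (rule finite_cartesian_product[OF assms assms])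
  have 1: "frank (\<lambda>A B. \<exists>d\<in>F\<times>F. g1 d A \<and> h1 d B)" by (rule frank_fin[OF f])
  have 2: "frank (\<lambda>A B. \<exists>d\<in>F\<times>F. g2 d A \<and> h2 d B)" by (rule frank_fin[OF f])
  have 3: "frank (\<lambda>A B. \<exists>d\<in>F\<times>F. g3 d A \<and> h3 d B)" by (rule frank_fin[OF f])
  have 4: "frank (\<lambda>A B. \<exists>d\<in>F\<times>F. g4 d A \<and> h4 d B)" by (rule frank_fin[OF f])
  note r = frank_or[OF frank_or[OF 1 2] frank_or[OF 3 4]]
  show ?thesis unfolding Seq_def using r by assumption
qed

lemma eq_sep:
  assumes L: "L1 \<in> LS P" "L2 \<in> LS P" "L3 \<in> LS P"
    and R: "R1 \<in> LS Q" "R2 \<in> LS Q" "R3 \<in> LS Q"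
  shows "(L1 @ R1 = L2 @ R2 @ L3 @ R3) \<longleftrightarrow> Seq (LS P \<inter> LS Q) (L1, L2, L3) (R1, R2, R3)"
proof
  assume "L1 @ R1 = L2 @ R2 @ L3 @ R3"
  from eq_split[OF this] show "Seq (LS P \<inter> LS Q) (L1, L2, L3) (R1, R2, R3)"
  proof (elim disjE exE conjE)
    fix D assume A: "L2 = L1 @ D" "R1 = D @ R2 @ L3 @ R3"
    have "D \<in> LS P" using LS_suffix[OF L(2) A(1)] .
    moreover have "D \<in> LS Q" using LS_prefix[OF R(1)] A(2) by blast
    moreover have "L3 \<in> LS Q" using LS_mid[OF R(1), of "D @ R2" L3 R3] A(2) by simp
    ultimately have "(D, L3) \<in> (LS P \<inter> LS Q) \<times> (LS P \<inter> LS Q)" using L(3) by simp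
    moreover have "g1 (D, L3) (L1, L2, L3) \<and> h1 (D, L3) (R1, R2, R3)"
      unfolding g1_def h1_def using A by simp
    ultimately show ?thesis unfolding Seq_def by blast
  next
    fix D E assume B: "L1 = L2 @ D" "R2 = D @ E" "R1 = E @ L3 @ R3"
    have "D \<in> LS P" using LS_suffix[OF L(1) B(1)] .
    moreover have "D \<in> LS Q" using LS_prefix[OF R(2) B(2)] .
    moreover have "L3 \<in> LS Q" using LS_mid[OF R(1), of E L3 R3] B(3) by simp
    ultimately have "(D, L3) \<in> (LS P \<inter> LS Q) \<times> (LS P \<inter> LS Q)" using L(3) by simp
    moreover have "g2 (D, L3) (L1, L2, L3) \<and> h2 (D, L3) (R1, R2, R3)"
      unfolding g2_def h2_def using B by simp
    ultimately show ?thesis unfolding Seq_def by blast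
  next
    fix D E assume C: "L1 = L2 @ R2 @ D" "L3 = D @ E" "R1 = E @ R3"
    have "R2 \<in> LS P" using LS_mid[OF L(1) C(1)] .
    moreover have "E \<in> LS P" using LS_suffix[OF L(3) C(2)] .
    moreover have "E \<in> LS Q" using LS_prefix[OF R(1) C(3)] .
    ultimately have "(R2, E) \<in> (LS P \<inter> LS Q) \<times> (LS P \<inter> LS Q)" using R(2) by simp
    moreover have "g3 (R2, E) (L1, L2, L3) \<and> h3 (R2, E) (R1, R2, R3)"
      unfolding g3_def h3_def using C by auto
    ultimately show ?thesis unfolding Seq_def by blast
  next
    fix D assume D: "L1 = L2 @ R2 @ L3 @ D" "R3 = D @ R1"
    have "R2 \<in> LS P" using LS_mid[OF L(1), of L2 R2 "L3 @ D"] D(1) by simp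
    moreover have "D \<in> LS P" using LS_suffix[OF L(1), of "L2 @ R2 @ L3" D] D(1) by simp
    moreover have "D \<in> LS Q" using LS_prefix[OF R(3) D(2)] .
    ultimately have "(R2, D) \<in> (LS P \<inter> LS Q) \<times> (LS P \<inter> LS Q)" using R(2) by simp
    moreover have "g4 (R2, D) (L1, L2, L3) \<and> h4 (R2, D) (R1, R2, R3)"
      unfolding g4_def h4_def using D by simp
    ultimately show ?thesis unfolding Seq_def by blast
  qed
next
  assume "Seq (LS P \<inter> LS Q) (L1, L2, L3) (R1, R2, R3)"
  then show "L1 @ R1 = L2 @ R2 @ L3 @ R3"
    unfolding Seq_def g1_def h1_def g2_def h2_def g3_def h3_def g4_def h4_def by auto
qed


definition Cg :: "'a list \<Rightarrow> 'a list \<Rightarrow> ('a list \<times> 'a list) set" where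
  "Cg P Q = {(L, R). (L \<in> Facs P \<and> R = []) \<or> (L = [] \<and> R \<in> Facs Q) \<or> ((\<exists>s. P = s @ L) \<and> (\<exists>t. Q = R @ t))}"

lemma C_facs: assumes "(L, R) \<in> Cg P Q" shows "L @ R \<in> Facs (P @ Q)"
proof -
  consider (a) "L \<in> Facs P" "R = []" | (b) "L = []" "R \<in> Facs Q" | (c) s t where "P = s @ L" "Q = R @ t"
    using assms unfolding Cg_def by blast
  then show ?thesis
  proof cases
    case a
    then obtain p s where "P = p @ L @ s" unfolding Facs_def by blast
    then have "P @ Q = p @ (L @ R) @ (s @ Q)" using a by simp
    then show ?thesis by (rule facs_mid)
  next
    case b
    then obtain p s where "Q = p @ R @ s" unfolding Facs_def by blast
    then have "P @ Q = (P @ p) @ (L @ R) @ s" using b by simp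
    then show ?thesis by (rule facs_mid)
  next
    case c
    then have "P @ Q = s @ (L @ R) @ t" by simp
    then show ?thesis by (rule facs_mid)
  qed
qed

lemma facs_C: assumes "x \<in> Facs (P @ Q)" shows "\<exists>L R. x = L @ R \<and> (L, R) \<in> Cg P Q"
proof -
  obtain p s where eq: "P @ Q = p @ x @ s" using assms unfolding Facs_def by blast
  obtain us where "(P = p @ us \<and> us @ Q = x @ s) \<or> (P @ us = p \<and> Q = us @ x @ s)"
    using eq append_eq_append_conv2[of P Q p "x @ s"] by blast
  then show ?thesis
  proof
    assume "P @ us = p \<and> Q = us @ x @ s"
    then have "x \<in> Facs Q" using facs_mid by blast
    then have "x = [] @ x \<and> ([], x) \<in> Cg P Q" unfolding Cg_def by simp
    then show ?thesis by blast
  next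
    assume h: "P = p @ us \<and> us @ Q = x @ s"
    then obtain vs where "(us = x @ vs \<and> vs @ Q = s) \<or> (us @ vs = x \<and> Q = vs @ s)"
      using append_eq_append_conv2[of us Q x s] by blast
    then show ?thesis
    proof
      assume "us = x @ vs \<and> vs @ Q = s"
      then have "P = p @ x @ vs" using h by simp
      then have "x \<in> Facs P" by (rule facs_mid)
      then have "x = x @ [] \<and> (x, []) \<in> Cg P Q" unfolding Cg_def by simp
      then show ?thesis by blast
    next
      assume h2: "us @ vs = x \<and> Q = vs @ s"
      then have "(us, vs) \<in> Cg P Q" using h unfolding Cg_def by blast
      then show ?thesis using h2 by blast
    qed
  qed
qed

definition val :: "(nat \<Rightarrow> 'a list) \<Rightarrow> (nat \<Rightarrow> 'a list) \<Rightarrow> nat \<Rightarrow> 'a list" where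
  "val \<alpha> \<beta> = (\<lambda>x. \<alpha> x @ \<beta> x)"

definition valid :: "'a list \<Rightarrow> 'a list \<Rightarrow> (nat \<Rightarrow> 'a list) \<Rightarrow> (nat \<Rightarrow> 'a list) \<Rightarrow> bool" where
  "valid P Q \<alpha> \<beta> \<longleftrightarrow> (\<forall>x. (\<alpha> x, \<beta> x) \<in> Cg P Q)"

lemma val_upd: "(val \<alpha> \<beta>)(x := L @ R) = val (\<alpha>(x := L)) (\<beta>(x := R))"
  unfolding val_def by (rule ext) simp

lemma valid_upd: "valid P Q \<alpha> \<beta> \<Longrightarrow> (L, R) \<in> Cg P Q \<Longrightarrow> valid P Q (\<alpha>(x := L)) (\<beta>(x := R))"
  unfolding valid_def by simp

fun tL :: "(nat \<Rightarrow> 'a list) \<Rightarrow> 'a fc_term \<Rightarrow> 'a list" where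
  "tL \<alpha> (FVar x) = \<alpha> x"
| "tL \<alpha> (FLet c) = [c]"
| "tL \<alpha> FEps = []"

fun tR :: "(nat \<Rightarrow> 'a list) \<Rightarrow> 'a fc_term \<Rightarrow> 'a list" where
  "tR \<beta> (FVar x) = \<beta> x"
| "tR \<beta> (FLet c) = []"
| "tR \<beta> FEps = []"

fun pres :: "'a list \<Rightarrow> 'a fc_term \<Rightarrow> bool" where
  "pres W (FLet c) = (c \<in> set W)"
| "pres W (FVar x) = True"
| "pres W FEps = True"

lemma pres_append: "pres (P @ Q) t \<longleftrightarrow> pres P t \<or> pres Q t"
  by (cases t) auto

lemma eval_val: "eval_term W (val \<alpha> \<beta>) t = (if pres W t then Some (tL \<alpha> t @ tR \<beta> t) else None)"
  by (cases t) (auto simp: val_def)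

lemma pres_facs:
  assumes "valid P Q \<alpha> \<beta>" "pres (P @ Q) t" shows "tL \<alpha> t @ tR \<beta> t \<in> Facs (P @ Q)"
proof (cases t)
  case (FVar x)
  have "(\<alpha> x, \<beta> x) \<in> Cg P Q" using assms(1) unfolding valid_def by blast
  then have "\<alpha> x @ \<beta> x \<in> Facs (P @ Q)" by (rule C_facs)
  then show ?thesis using FVar by simp
next
  case (FLet c)
  then have "c \<in> set (P @ Q)" using assms(2) by simp
  then obtain ys zs where "P @ Q = ys @ [c] @ zs" by (metis append_Cons append_Nil split_list)
  then have "[c] \<in> Facs (P @ Q)" by (rule facs_mid)
  then show ?thesis using FLet by simp
next
  case FEps then show ?thesis by simp
qed

lemma sat_atom:
  assumes "valid P Q \<alpha> \<beta>"
  shows "sat (P @ Q) (val \<alpha> \<beta>) (FAtom t1 t2 t3) \<longleftrightarrow>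
    pres (P @ Q) t1 \<and> pres (P @ Q) t2 \<and> pres (P @ Q) t3 \<and>
    tL \<alpha> t1 @ tR \<beta> t1 = tL \<alpha> t2 @ tR \<beta> t2 @ tL \<alpha> t3 @ tR \<beta> t3"
proof (cases "pres (P @ Q) t1 \<and> pres (P @ Q) t2 \<and> pres (P @ Q) t3")
  case True
  then show ?thesis using pres_facs[OF assms] by (simp add: eval_val)
next
  case False
  then show ?thesis by (auto simp: eval_val)
qed

lemma valid_LS_both:
  fixes P Q :: "nat \<Rightarrow> 'a list"
  assumes "valid (P a) (Q b) \<alpha> \<beta>" shows "\<alpha> x \<in> LS P \<and> \<beta> x \<in> LS Q"
proof -
  have "(\<alpha> x, \<beta> x) \<in> Cg (P a) (Q b)" using assms unfolding valid_def by blast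
  then consider (a) "\<alpha> x \<in> Facs (P a)" "\<beta> x = []" | (b) "\<alpha> x = []" "\<beta> x \<in> Facs (Q b)"
    | (c) s t where "P a = s @ \<alpha> x" "Q b = \<beta> x @ t"
    unfolding Cg_def by blast
  then show ?thesis
  proof cases
    case a then show ?thesis unfolding LS_def by auto
  next
    case b then show ?thesis unfolding LS_def by auto
  next
    case c
    have "\<alpha> x \<in> Facs (P a)" using c(1) by (rule facs_suffix)
    moreover have "\<beta> x \<in> Facs (Q b)" using c(2) by (rule facs_prefix)
    ultimately show ?thesis unfolding LS_def by auto
  qed
qed

lemma valid_LS:
  fixes P Q :: "nat \<Rightarrow> 'a list"
  assumes "valid (P a) (Q b) \<alpha> \<beta>" shows "\<alpha> x \<in> LS P" "\<beta> x \<in> LS Q"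
  using valid_LS_both[of P a Q b \<alpha> \<beta> x, OF assms] by auto

lemma tL_LS: fixes P Q :: "nat \<Rightarrow> 'a list" assumes "valid (P a) (Q b) \<alpha> \<beta>" shows "tL \<alpha> t \<in> LS P"
  using valid_LS_both[of P a Q b \<alpha> \<beta>, OF assms] by (cases t) (auto simp: LS_def)

lemma tR_LS: fixes P Q :: "nat \<Rightarrow> 'a list" assumes "valid (P a) (Q b) \<alpha> \<beta>" shows "tR \<beta> t \<in> LS Q"
  using valid_LS_both[of P a Q b \<alpha> \<beta>, OF assms] by (cases t) (auto simp: LS_def)

definition works :: "(nat \<Rightarrow> 'a list) \<Rightarrow> (nat \<Rightarrow> 'a list) \<Rightarrow> 'a fc
    \<Rightarrow> (nat \<times> (nat \<Rightarrow> 'a list) \<Rightarrow> nat \<times> (nat \<Rightarrow> 'a list) \<Rightarrow> bool) \<Rightarrow> bool" where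
  "works P Q \<phi> S \<longleftrightarrow> (\<forall>a b \<alpha> \<beta>. valid (P a) (Q b) \<alpha> \<beta> \<longrightarrow>
      (sat (P a @ Q b) (val \<alpha> \<beta>) \<phi> \<longleftrightarrow> S (a, \<alpha>) (b, \<beta>)))"


lemma Cg_iff: "(L, R) \<in> Cg P Q \<longleftrightarrow> (L \<in> Facs P \<and> R = []) \<or> (L = [] \<and> R \<in> Facs Q) \<or> ((\<exists>s. P = s @ L) \<and> (\<exists>t. Q = R @ t))"
  by (simp add: Cg_def)

lemma not_step: "frank S1 \<Longrightarrow> works P Q \<phi> S1 \<Longrightarrow> \<exists>S. frank S \<and> works P Q (FNot \<phi>) S"
  by (rule exI[of _ "\<lambda>A B. \<not> S1 A B"]) (simp add: frank_not works_def)

lemma and_step: "frank S1 \<Longrightarrow> works P Q \<phi> S1 \<Longrightarrow> frank S2 \<Longrightarrow> works P Q \<psi> S2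
   \<Longrightarrow> \<exists>S. frank S \<and> works P Q (FAnd \<phi> \<psi>) S"
  by (rule exI[of _ "\<lambda>A B. S1 A B \<and> S2 A B"]) (simp add: frank_and works_def)

lemma or_step: "frank S1 \<Longrightarrow> works P Q \<phi> S1 \<Longrightarrow> frank S2 \<Longrightarrow> works P Q \<psi> S2
   \<Longrightarrow> \<exists>S. frank S \<and> works P Q (FOr \<phi> \<psi>) S"
  by (rule exI[of _ "\<lambda>A B. S1 A B \<or> S2 A B"]) (simp add: frank_or works_def)

lemma ex_step:
  fixes P Q :: "nat \<Rightarrow> 'a list"
  assumes f1: "frank S1" and w1: "works P Q \<phi> S1"
  shows "\<exists>S. frank S \<and> works P Q (FEx x \<phi>) S"
proof -
  define hA :: "nat \<times> (nat \<Rightarrow> 'a list) \<Rightarrow> 'a list \<Rightarrow> nat \<times> (nat \<Rightarrow> 'a list)"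
    where "hA = (\<lambda>A L. (fst A, (snd A)(x := L)))"
  define hB :: "nat \<times> (nat \<Rightarrow> 'a list) \<Rightarrow> 'a list \<Rightarrow> nat \<times> (nat \<Rightarrow> 'a list)"
    where "hB = (\<lambda>B R. (fst B, (snd B)(x := R)))"
  define G1 :: "nat \<times> (nat \<Rightarrow> 'a list) \<Rightarrow> 'a list set" where "G1 = (\<lambda>A. Facs (P (fst A)))"
  define G2 :: "nat \<times> (nat \<Rightarrow> 'a list) \<Rightarrow> 'a list set" where "G2 = (\<lambda>B. {[]})"
  define G3 :: "nat \<times> (nat \<Rightarrow> 'a list) \<Rightarrow> 'a list set" where "G3 = (\<lambda>A. {[]})"
  define G4 :: "nat \<times> (nat \<Rightarrow> 'a list) \<Rightarrow> 'a list set" where "G4 = (\<lambda>B. Facs (Q (fst B)))"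
  define G5 :: "nat \<times> (nat \<Rightarrow> 'a list) \<Rightarrow> 'a list set" where "G5 = (\<lambda>A. {L. \<exists>s. P (fst A) = s @ L})"
  define G6 :: "nat \<times> (nat \<Rightarrow> 'a list) \<Rightarrow> 'a list set" where "G6 = (\<lambda>B. {R. \<exists>t. Q (fst B) = R @ t})"
  define S where "S = (\<lambda>A B. (\<exists>L\<in>G1 A. \<exists>R\<in>G2 B. S1 (hA A L) (hB B R))
     \<or> ((\<exists>L\<in>G3 A. \<exists>R\<in>G4 B. S1 (hA A L) (hB B R)) \<or> (\<exists>L\<in>G5 A. \<exists>R\<in>G6 B. S1 (hA A L) (hB B R))))"
  have fS: "frank S" unfolding S_def
    by (rule frank_or[OF frank_exLR[OF f1] frank_or[OF frank_exLR[OF f1] frank_exLR[OF f1]]])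
  have "works P Q (FEx x \<phi>) S"
    unfolding works_def
  proof (intro allI impI)
    fix a b \<alpha> \<beta> assume v: "valid (P a) (Q b) \<alpha> \<beta>"
    have "sat (P a @ Q b) (val \<alpha> \<beta>) (FEx x \<phi>) \<longleftrightarrow>
        (\<exists>w\<in>Facs (P a @ Q b). sat (P a @ Q b) ((val \<alpha> \<beta>)(x := w)) \<phi>)" by simp
    also have "\<dots> \<longleftrightarrow> (\<exists>L R. (L, R) \<in> Cg (P a) (Q b) \<and> sat (P a @ Q b) (val (\<alpha>(x := L)) (\<beta>(x := R))) \<phi>)"
    proof
      assume "\<exists>w\<in>Facs (P a @ Q b). sat (P a @ Q b) ((val \<alpha> \<beta>)(x := w)) \<phi>"
      then obtain w where w: "w \<in> Facs (P a @ Q b)" "sat (P a @ Q b) ((val \<alpha> \<beta>)(x := w)) \<phi>" by blast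
      obtain L R where "w = L @ R" "(L, R) \<in> Cg (P a) (Q b)" using facs_C[OF w(1)] by blast
      then show "\<exists>L R. (L, R) \<in> Cg (P a) (Q b) \<and> sat (P a @ Q b) (val (\<alpha>(x := L)) (\<beta>(x := R))) \<phi>"
        using w(2) val_upd by metis
    next
      assume "\<exists>L R. (L, R) \<in> Cg (P a) (Q b) \<and> sat (P a @ Q b) (val (\<alpha>(x := L)) (\<beta>(x := R))) \<phi>"
      then obtain L R where "(L, R) \<in> Cg (P a) (Q b)" "sat (P a @ Q b) (val (\<alpha>(x := L)) (\<beta>(x := R))) \<phi>"
        by blast
      then show "\<exists>w\<in>Facs (P a @ Q b). sat (P a @ Q b) ((val \<alpha> \<beta>)(x := w)) \<phi>"
        using C_facs val_upd by metis
    qed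
    also have "\<dots> \<longleftrightarrow> (\<exists>L R. (L, R) \<in> Cg (P a) (Q b) \<and> S1 (a, \<alpha>(x := L)) (b, \<beta>(x := R)))"
    proof -
      have "\<And>L R. (L, R) \<in> Cg (P a) (Q b) \<Longrightarrow>
        sat (P a @ Q b) (val (\<alpha>(x := L)) (\<beta>(x := R))) \<phi> \<longleftrightarrow> S1 (a, \<alpha>(x := L)) (b, \<beta>(x := R))"
        using w1 valid_upd[OF v] unfolding works_def by blast
      then show ?thesis by blast
    qed
    also have "\<dots> \<longleftrightarrow> S (a, \<alpha>) (b, \<beta>)"
      unfolding S_def hA_def hB_def G1_def G2_def G3_def G4_def G5_def G6_def Cg_iff
      by (simp only: fst_conv snd_conv mem_Collect_eq singleton_iff) blast
    finally show "sat (P a @ Q b) (val \<alpha> \<beta>) (FEx x \<phi>) \<longleftrightarrow> S (a, \<alpha>) (b, \<beta>)" .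
  qed
  then show ?thesis using fS by blast
qed

lemma atom_step:
  fixes P Q :: "nat \<Rightarrow> 'a list"
  assumes fin: "finite (LS P \<inter> LS Q)"
  shows "\<exists>S. frank S \<and> works P Q (FAtom t1 t2 t3) S"
proof -
  define pr :: "'a fc_term \<Rightarrow> nat \<times> (nat \<Rightarrow> 'a list) \<Rightarrow> nat \<times> (nat \<Rightarrow> 'a list) \<Rightarrow> bool"
    where "pr = (\<lambda>t A B. pres (P (fst A)) t \<or> pres (Q (fst B)) t)"
  define fA where "fA = (\<lambda>A::nat \<times> (nat \<Rightarrow> 'a list). (tL (snd A) t1, tL (snd A) t2, tL (snd A) t3))"
  define fB where "fB = (\<lambda>B::nat \<times> (nat \<Rightarrow> 'a list). (tR (snd B) t1, tR (snd B) t2, tR (snd B) t3))"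
  define S where "S = (\<lambda>A B. (pr t1 A B \<and> (pr t2 A B \<and> pr t3 A B)) \<and> Seq (LS P \<inter> LS Q) (fA A) (fB B))"
  have p: "frank (pr t)" for t unfolding pr_def by (rule frank_or[OF frank_left frank_right])
  have q: "frank (\<lambda>A B. Seq (LS P \<inter> LS Q) (fA A) (fB B))" by (rule frank_comp[OF frank_Seq[OF fin]])
  have fS: "frank S" unfolding S_def
    using frank_and[OF frank_and[OF p frank_and[OF p p]] q] by simp
  have "works P Q (FAtom t1 t2 t3) S"
    unfolding works_def
  proof (intro allI impI)
    fix a b \<alpha> \<beta> assume v: "valid (P a) (Q b) \<alpha> \<beta>"
    have e: "tL \<alpha> t1 @ tR \<beta> t1 = tL \<alpha> t2 @ tR \<beta> t2 @ tL \<alpha> t3 @ tR \<beta> t3 \<longleftrightarrow>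
       Seq (LS P \<inter> LS Q) (fA (a, \<alpha>)) (fB (b, \<beta>))"
      unfolding fA_def fB_def
      by (simp add: eq_sep[OF tL_LS[of P a Q b \<alpha> \<beta> t1, OF v] tL_LS[of P a Q b \<alpha> \<beta> t2, OF v]
          tL_LS[of P a Q b \<alpha> \<beta> t3, OF v] tR_LS[of P a Q b \<alpha> \<beta> t1, OF v]
          tR_LS[of P a Q b \<alpha> \<beta> t2, OF v] tR_LS[of P a Q b \<alpha> \<beta> t3, OF v]])
    show "sat (P a @ Q b) (val \<alpha> \<beta>) (FAtom t1 t2 t3) \<longleftrightarrow> S (a, \<alpha>) (b, \<beta>)"
      unfolding sat_atom[OF v] S_def pr_def using e by (simp add: pres_append)
  qed
  then show ?thesis using fS by blast
qed

lemma main: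
  fixes P Q :: "nat \<Rightarrow> 'a list"
  assumes fin: "finite (LS P \<inter> LS Q)"
  shows "\<exists>S. frank S \<and> works P Q \<phi> S"
proof (induction \<phi>)
  case (FAtom t1 t2 t3) then show ?case using atom_step[OF fin] by blast
next
  case (FAnd \<phi> \<psi>) then show ?case using and_step by blast
next
  case (FOr \<phi> \<psi>) then show ?case using or_step by blast
next
  case (FNot \<phi>) then show ?case using not_step by blast
next
  case (FEx x \<phi>) then show ?case using ex_step by blast
next
  case (FAll x \<phi>)
  then obtain S1 where "frank S1" "works P Q \<phi> S1" by blast
  then obtain S2 where "frank S2" "works P Q (FNot \<phi>) S2" using not_step by blast
  then obtain S3 where "frank S3" "works P Q (FEx x (FNot \<phi>)) S3" using ex_step by blast
  then obtain S4 where f4: "frank S4" and w4: "works P Q (FNot (FEx x (FNot \<phi>))) S4" using not_step by blast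
  have "works P Q (FAll x \<phi>) S4" using w4 unfolding works_def by simp
  then show ?case using f4 by blast
qed


theorem proposition4p13:
  fixes w1 w2 w3 u v :: "('a::finite) list" and f :: "nat \<Rightarrow> nat"
  assumes "co_primitive u v"
    and "inj f"
  shows "{w1 @ word_pow u p @ w2 @ word_pow v (f p) @ w3 | p. True} \<notin> FC_languages"
proof
  note cp = assms(1)
  assume "{w1 @ word_pow u p @ w2 @ word_pow v (f p) @ w3 | p. True} \<in> FC_languages"
  then obtain \<phi> where Leq: "{w1 @ word_pow u p @ w2 @ word_pow v (f p) @ w3 | p. True} = fc_lang \<phi>"
    unfolding FC_languages_def by blast
  define P where "P = (\<lambda>a. w1 @ word_pow u a)"
  define Q where "Q = (\<lambda>b. w2 @ word_pow v b @ w3)"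
  define K where "K = length w1 + length w2 + length w3 + length u * length v + 1"
  have sub: "LS P \<inter> LS Q \<subseteq> {xs. set xs \<subseteq> UNIV \<and> length xs \<le> K}"
  proof
    fix x assume x: "x \<in> LS P \<inter> LS Q"
    have "length x \<le> K"
    proof (cases "length x \<le> 1")
      case True then show ?thesis unfolding K_def by simp
    next
      case False
      then obtain a b where "x \<in> Facs (P a)" "x \<in> Facs (Q b)" using x unfolding LS_def by auto
      then have "length x < length w1 + length w2 + length w3 + length u * length v"
        unfolding P_def Q_def by (rule common_bound[OF cp])
      then show ?thesis unfolding K_def by simp
    qed
    then show "x \<in> {xs. set xs \<subseteq> UNIV \<and> length xs \<le> K}" by simp
  qed
  have fin: "finite (LS P \<inter> LS Q)"
    by (rule finite_subset[OF sub finite_lists_length_le[OF finite_UNIV]])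
  obtain S where fS: "frank S" and wS: "works P Q \<phi> S" using main[OF fin] by blast
  have v0: "valid (P a) (Q b) (\<lambda>_. []) (\<lambda>_. [])" for a b by (simp add: valid_def Cg_def)
  have val0: "val (\<lambda>_. []) (\<lambda>_. []) = (\<lambda>_. [])" by (simp add: val_def)
  have T: "S (a, \<lambda>_. []) (b, \<lambda>_. []) \<longleftrightarrow> b = f a" for a b
  proof -
    have "S (a, \<lambda>_. []) (b, \<lambda>_. []) \<longleftrightarrow> sat (P a @ Q b) (val (\<lambda>_. []) (\<lambda>_. [])) \<phi>"
      using wS v0[of a b] unfolding works_def by blast
    also have "\<dots> \<longleftrightarrow> P a @ Q b \<in> fc_lang \<phi>" by (simp add: fc_lang_def val0)
    also have "\<dots> \<longleftrightarrow> P a @ Q b \<in> {w1 @ word_pow u p @ w2 @ word_pow v (f p) @ w3 | p. True}"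
      using Leq by simp
    also have "\<dots> \<longleftrightarrow> b = f a"
    proof
      assume "P a @ Q b \<in> {w1 @ word_pow u p @ w2 @ word_pow v (f p) @ w3 | p. True}"
      then obtain p where "w1 @ word_pow u a @ w2 @ word_pow v b @ w3 = w1 @ word_pow u p @ w2 @ word_pow v (f p) @ w3"
        unfolding P_def Q_def by auto
      then have "a = p \<and> b = f p" by (rule uniqueness[OF cp])
      then show "b = f a" by simp
    next
      assume "b = f a"
      then show "P a @ Q b \<in> {w1 @ word_pow u p @ w2 @ word_pow v (f p) @ w3 | p. True}"
        unfolding P_def Q_def by auto
    qed
    finally show ?thesis .
  qed
  have "frank (\<lambda>a b. S (a, \<lambda>_. []) (b, \<lambda>_. []))" by (rule frank_comp[OF fS])
  then have "frank (\<lambda>a b. b = f a)" using T by simp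
  then show False using frank_infinite[OF assms(2)] by simp
qed

end
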